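(* Let $A$ be a two-dimensional evolution algebra over a field $\mathbb{K}$ with $A^2=A$. Then: (i) if $\mathfrak{S}(A)=\mathfrak{D}_1$, there is a natural basis with structure matrix $\begin{pmatrix}1&0\\0&1\end{pmatrix}$ (the algebra $A_1$); (ii) if $\mathfrak{S}(A)=\mathfrak{D}_2$, there is a natural basis with structure matrix $\begin{pmatrix}0&\alpha\\1&0\end{pmatrix}$ for some $\alpha\in\mathbb{K}^\times$ (the algebra $A_{2,\alpha}$); (iii) if $\mathfrak{S}(A)=\mathfrak{D}_3$, there is a natural basis with structure matrix $\begin{pmatrix}1&\alpha\\0&1\end{pmatrix}$ for some $\alpha\in\mathbb{K}^\times$ (the algebra $A_{3,\alpha}$); (iv) if $\mathfrak{S}(A)=\mathfrak{D}_4$, there is a natural basis with structure matrix $\begin{pmatrix}0&1\\\alpha&1\end{pmatrix}$ for some $\alpha\in\mathbb{K}^\times$ (the algebra $A_{4,\alpha}$); (v) if $\mathfrak{S}(A)=\mathfrak{D}_5$, there is a natural basis with structure matrix $\begin{pmatrix}1&\alpha\\\beta&1\end{pmatrix}$ for some $\alpha,\beta\in\mathbb{K}^\times$ with $\alpha\beta\neq1$ (the algebra $A_{5,\alpha,\beta}$).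
   Context: An evolution algebra over $\mathbb{K}$ is a $\mathbb{K}$-algebra with a basis $\{e_i\}$ (natural basis) such that $e_ie_j=0$ for $i\neq j$. For a natural basis $B=\{e_1,e_2\}$ the structure matrix is $M_B=(\omega_{ij})$ where $e_j^2=\omega_{1j}e_1+\omega_{2j}e_2$. The pseudo-square relative to $B$ is $E_B\subseteq\{L,T,R,D\}$ with $L\in E_B$ iff $\omega_{11}\neq0$, $T\in E_B$ iff $\omega_{12}\neq0$, $R\in E_B$ iff $\omega_{22}\neq0$, $D\in E_B$ iff $\omega_{21}\neq0$; the square $\mathfrak{S}(A)$ is the set of all $E_B$ over all natural bases $B$. $\mathfrak{D}_1=\{\{L,R\}\}$, $\mathfrak{D}_2=\{\{T,D\}\}$, $\mathfrak{D}_3=\{\{L,T,R\},\{L,R,D\}\}$, $\mathfrak{D}_4=\{\{L,T,D\},\{T,R,D\}\}$, $\mathfrak{D}_5=\{\{L,T,R,D\}\}$. *)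

theory Defs
  imports Main
begin

text \<open>A two-dimensional algebra over a field 'k is modelled (up to isomorphism)
  as the vector space 'k x 'k equipped with a bilinear product m.\<close>

type_synonym 'k vec2 = "'k \<times> 'k"

definition vadd :: "'k::field vec2 \<Rightarrow> 'k vec2 \<Rightarrow> 'k vec2" where
  "vadd u v = (fst u + fst v, snd u + snd v)"

definition vsmul :: "'k::field \<Rightarrow> 'k vec2 \<Rightarrow> 'k vec2" where
  "vsmul c u = (c * fst u, c * snd u)"

definition vzero :: "'k::field vec2" where
  "vzero = (0, 0)"

definition bilinear2 :: "('k::field vec2 \<Rightarrow> 'k vec2 \<Rightarrow> 'k vec2) \<Rightarrow> bool" where
  "bilinear2 m \<longleftrightarrow>
     (\<forall>u v w. m (vadd u v) w = vadd (m u w) (m v w)) \<and>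
     (\<forall>u v w. m u (vadd v w) = vadd (m u v) (m u w)) \<and>
     (\<forall>c u v. m (vsmul c u) v = vsmul c (m u v)) \<and>
     (\<forall>c u v. m u (vsmul c v) = vsmul c (m u v))"

definition lin_indep2 :: "'k::field vec2 \<Rightarrow> 'k vec2 \<Rightarrow> bool" where
  "lin_indep2 e1 e2 \<longleftrightarrow>
     (\<forall>a b. vadd (vsmul a e1) (vsmul b e2) = vzero \<longrightarrow> a = 0 \<and> b = 0)"

definition natural_basis :: "('k::field vec2 \<Rightarrow> 'k vec2 \<Rightarrow> 'k vec2) \<Rightarrow> 'k vec2 \<Rightarrow> 'k vec2 \<Rightarrow> bool" where
  "natural_basis m e1 e2 \<longleftrightarrow> lin_indep2 e1 e2 \<and> m e1 e2 = vzero \<and> m e2 e1 = vzero"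

definition evolution_algebra :: "('k::field vec2 \<Rightarrow> 'k vec2 \<Rightarrow> 'k vec2) \<Rightarrow> bool" where
  "evolution_algebra m \<longleftrightarrow> bilinear2 m \<and> (\<exists>e1 e2. natural_basis m e1 e2)"

text \<open>A^2 = A: every element is a (finite) linear combination of products.\<close>
definition square_full :: "('k::field vec2 \<Rightarrow> 'k vec2 \<Rightarrow> 'k vec2) \<Rightarrow> bool" where
  "square_full m \<longleftrightarrow>
     (\<forall>w. \<exists>ps :: ('k \<times> 'k vec2 \<times> 'k vec2) list.
        w = foldr (\<lambda>(c, u, v) acc. vadd (vsmul c (m u v)) acc) ps vzero)"

definition coords :: "'k::field vec2 \<Rightarrow> 'k vec2 \<Rightarrow> 'k vec2 \<Rightarrow> 'k \<times> 'k" where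
  "coords e1 e2 v = (THE ab. v = vadd (vsmul (fst ab) e1) (vsmul (snd ab) e2))"

text \<open>Structure matrix ((w11, w12), (w21, w22)) where e_j^2 = w1j e1 + w2j e2.\<close>
definition struct_matrix ::
  "('k::field vec2 \<Rightarrow> 'k vec2 \<Rightarrow> 'k vec2) \<Rightarrow> 'k vec2 \<Rightarrow> 'k vec2 \<Rightarrow> ('k \<times> 'k) \<times> ('k \<times> 'k)" where
  "struct_matrix m e1 e2 =
     (let c1 = coords e1 e2 (m e1 e1); c2 = coords e1 e2 (m e2 e2)
      in ((fst c1, fst c2), (snd c1, snd c2)))"

datatype pos = L | T | R | D

definition pseudo_square :: "('k::field vec2 \<Rightarrow> 'k vec2 \<Rightarrow> 'k vec2) \<Rightarrow> 'k vec2 \<Rightarrow> 'k vec2 \<Rightarrow> pos set" where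
  "pseudo_square m e1 e2 =
     (let M = struct_matrix m e1 e2 in
       {x. (x = L \<and> fst (fst M) \<noteq> 0) \<or> (x = T \<and> snd (fst M) \<noteq> 0) \<or>
           (x = R \<and> snd (snd M) \<noteq> 0) \<or> (x = D \<and> fst (snd M) \<noteq> 0)})"

definition square_of :: "('k::field vec2 \<Rightarrow> 'k vec2 \<Rightarrow> 'k vec2) \<Rightarrow> pos set set" where
  "square_of m = {pseudo_square m e1 e2 | e1 e2. natural_basis m e1 e2}"

definition "D1 = {{L, R}}"
definition "D2 = {{T, D}}"
definition "D3 = {{L, T, R}, {L, R, D}}"
definition "D4 = {{L, T, D}, {T, R, D}}"
definition "D5 = {{L, T, R, D}}"

end

theory Submission
  imports Defs
begin

lemma li_det: fixes e1 e2 :: "'k::field vec2"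
  assumes "lin_indep2 e1 e2" shows "fst e1 * snd e2 - snd e1 * fst e2 \<noteq> 0"
proof
  assume h: "fst e1 * snd e2 - snd e1 * fst e2 = 0"
  obtain p q where e1: "e1 = (p,q)" by (cases e1)
  obtain r s where e2: "e2 = (r,s)" by (cases e2)
  have li: "a = 0 \<and> b = 0" if "a*p + b*r = 0" "a*q+b*s = 0" for a b
  proof -
    have "vadd (vsmul a e1) (vsmul b e2) = vzero"
      using that by (simp add: e1 e2 vadd_def vsmul_def vzero_def)
    then show ?thesis using assms unfolding lin_indep2_def by blast
  qed
  have d: "p*s = q*r" using h e1 e2 by simp
  have "s*p + (-q)*r = p*s - q*r" "s*q+(-q)*s = 0" by (simp_all add: algebra_simps)
  then have "s*p + (-q)*r = 0" "s*q+(-q)*s = 0" using d by simp_all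
  then have sq: "s = 0 \<and> - q = 0" using li[of s "-q"] by simp
  then have sq: "s = 0" "q = 0" by simp_all
  have "r*p + (-p)*r = 0" "r*q+(-p)*s = 0" unfolding sq by (simp_all add: algebra_simps)
  then have "r = 0 \<and> - p = 0" using li[of r "-p"] by simp
  then have "r = 0" "p = 0" by simp_all
  moreover note sq
  ultimately show False using li[of 1 0] by simp
qed

lemma li_span: fixes e1 e2 :: "'k::field vec2"
  assumes "lin_indep2 e1 e2" shows "\<exists>x y. v = vadd (vsmul x e1) (vsmul y e2)"
proof -
  obtain p q where e1: "e1 = (p,q)" by (cases e1)
  obtain r s where e2: "e2 = (r,s)" by (cases e2)
  obtain v1 v2 where v: "v = (v1,v2)" by (cases v)
  define Dt where "Dt = p*s - q*r"
  have d: "Dt \<noteq> 0" using li_det[OF assms] e1 e2 Dt_def by simp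
  have c1: "(v1*s - v2*r)/Dt * p + (p*v2 - q*v1)/Dt * r = v1"
  proof -
    have "(v1*s - v2*r) * p + (p*v2 - q*v1) * r = v1 * Dt" unfolding Dt_def by (simp add: algebra_simps)
    then show ?thesis using d by (simp add: field_simps)
  qed
  have c2: "(v1*s - v2*r)/Dt * q + (p*v2 - q*v1)/Dt * s = v2"
  proof -
    have "(v1*s - v2*r) * q + (p*v2 - q*v1) * s = v2 * Dt" unfolding Dt_def by (simp add: algebra_simps)
    then show ?thesis using d by (simp add: field_simps)
  qed
  show ?thesis
    apply (rule exI[of _ "(v1*s - v2*r)/Dt"], rule exI[of _ "(p*v2 - q*v1)/Dt"])
    using c1 c2 unfolding v e1 e2 vadd_def vsmul_def by (simp add: mult.commute)
qed

lemma li_uniq: fixes e1 e2 :: "'k::field vec2"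
  assumes "lin_indep2 e1 e2" "vadd (vsmul x e1) (vsmul y e2) = vadd (vsmul x' e1) (vsmul y' e2)"
  shows "x = x' \<and> y = y'"
proof -
  have "vadd (vsmul (x-x') e1) (vsmul (y-y') e2) = vzero"
    using assms(2) unfolding vadd_def vsmul_def vzero_def
    by (auto simp: algebra_simps prod_eq_iff)
  then have "x - x' = 0 \<and> y - y' = 0" using assms(1) unfolding lin_indep2_def by blast
  then show ?thesis by simp
qed

lemma li_coords: fixes e1 e2 :: "'k::field vec2"
  assumes "lin_indep2 e1 e2"
  shows "coords e1 e2 (vadd (vsmul x e1) (vsmul y e2)) = (x,y)"
  unfolding coords_def
  apply (rule the_equality)
   apply simp
  subgoal for ab using li_uniq[OF assms, of x y "fst ab" "snd ab"] by (cases ab) auto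
  done

lemma sm_iff: fixes e1 e2 :: "'k::field vec2"
  assumes "lin_indep2 e1 e2"
  shows "struct_matrix m e1 e2 = ((a,b),(c,d)) \<longleftrightarrow>
    (m e1 e1 = vadd (vsmul a e1) (vsmul c e2) \<and> m e2 e2 = vadd (vsmul b e1) (vsmul d e2))"
proof -
  obtain x y where 1: "m e1 e1 = vadd (vsmul x e1) (vsmul y e2)" using li_span[OF assms] by blast
  obtain x' y' where 2: "m e2 e2 = vadd (vsmul x' e1) (vsmul y' e2)" using li_span[OF assms] by blast
  show ?thesis unfolding struct_matrix_def Let_def 1 2 li_coords[OF assms]
    using li_uniq[OF assms] by auto
qed

lemma ps_eq: fixes e1 e2 :: "'k::field vec2"
  assumes "struct_matrix m e1 e2 = ((a,b),(c,d))"
  shows "(L \<in> pseudo_square m e1 e2 \<longleftrightarrow> a \<noteq> 0) \<and> (T \<in> pseudo_square m e1 e2 \<longleftrightarrow> b \<noteq> 0)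
    \<and> (R \<in> pseudo_square m e1 e2 \<longleftrightarrow> d \<noteq> 0) \<and> (D \<in> pseudo_square m e1 e2 \<longleftrightarrow> c \<noteq> 0)"
  unfolding pseudo_square_def Let_def assms by auto

lemma prod_lem: fixes m :: "'k::field vec2 \<Rightarrow> 'k vec2 \<Rightarrow> 'k vec2"
  assumes "bilinear2 m" "m e1 e2 = vzero" "m e2 e1 = vzero"
  shows "m (vadd (vsmul x1 e1) (vsmul x2 e2)) (vadd (vsmul y1 e1) (vsmul y2 e2))
     = vadd (vsmul (x1*y1) (m e1 e1)) (vsmul (x2*y2) (m e2 e2))"
proof -
  have r: "\<And>u v w. m (vadd u v) w = vadd (m u w) (m v w)" "\<And>u v w. m u (vadd v w) = vadd (m u v) (m u w)"
    "\<And>c u v. m (vsmul c u) v = vsmul c (m u v)" "\<And>c u v. m u (vsmul c v) = vsmul c (m u v)"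
    using assms(1) unfolding bilinear2_def by blast+
  show ?thesis unfolding r assms(2,3) unfolding vadd_def vsmul_def vzero_def
    by (simp add: algebra_simps)
qed

lemma fold_span: fixes m :: "'k::field vec2 \<Rightarrow> 'k vec2 \<Rightarrow> 'k vec2"
  assumes "bilinear2 m" "natural_basis m e1 e2"
  shows "\<exists>x y. foldr (\<lambda>(c, u, v) acc. vadd (vsmul c (m u v)) acc) ps vzero
     = vadd (vsmul x (m e1 e1)) (vsmul y (m e2 e2))"
proof (induction ps)
  case Nil
  show ?case by (rule exI[of _ 0], rule exI[of _ 0]) (simp add: vadd_def vsmul_def vzero_def)
next
  case (Cons p ps)
  obtain c u v where p: "p = (c,u,v)" by (cases p) auto
  have li: "lin_indep2 e1 e2" and z: "m e1 e2 = vzero" "m e2 e1 = vzero"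
    using assms(2) unfolding natural_basis_def by auto
  obtain x1 x2 where u: "u = vadd (vsmul x1 e1) (vsmul x2 e2)" using li_span[OF li] by blast
  obtain y1 y2 where v: "v = vadd (vsmul y1 e1) (vsmul y2 e2)" using li_span[OF li] by blast
  obtain x y where IH: "foldr (\<lambda>(c, u, v) acc. vadd (vsmul c (m u v)) acc) ps vzero
     = vadd (vsmul x (m e1 e1)) (vsmul y (m e2 e2))" using Cons by blast
  show ?case unfolding p
    apply (rule exI[of _ "c*x1*y1 + x"], rule exI[of _ "c*x2*y2+y"])
    using IH prod_lem[OF assms(1) z, of x1 x2 y1 y2] unfolding u[symmetric] v[symmetric]
    by (simp add: vadd_def vsmul_def algebra_simps)
qed

lemma det_nz: fixes m :: "'k::field vec2 \<Rightarrow> 'k vec2 \<Rightarrow> 'k vec2"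
  assumes "bilinear2 m" "natural_basis m e1 e2" "square_full m"
    "struct_matrix m e1 e2 = ((a,b),(c,d))"
  shows "a*d \<noteq> b*c"
proof
  assume h: "a*d = b*c"
  have li: "lin_indep2 e1 e2" using assms(2) unfolding natural_basis_def by auto
  have E: "m e1 e1 = vadd (vsmul a e1) (vsmul c e2)" "m e2 e2 = vadd (vsmul b e1) (vsmul d e2)"
    using sm_iff[OF li] assms(4) by auto
  have sp: "\<exists>x y. w = vadd (vsmul (x*a+y*b) e1) (vsmul (x*c+y*d) e2)" for w
  proof -
    obtain ps where "w = foldr (\<lambda>(c, u, v) acc. vadd (vsmul c (m u v)) acc) ps vzero"
      using assms(3) unfolding square_full_def by blast
    then obtain x y where "w = vadd (vsmul x (m e1 e1)) (vsmul y (m e2 e2))"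
      using fold_span[OF assms(1,2)] by metis
    then show ?thesis unfolding E by (intro exI[of _ x] exI[of _ y]) (auto simp: vadd_def vsmul_def algebra_simps)
  qed
  obtain x y where 1: "vadd (vsmul 1 e1) (vsmul 0 e2) = vadd (vsmul (x*a+y*b) e1) (vsmul (x*c+y*d) e2)"
    using sp by blast
  obtain x' y' where 2: "vadd (vsmul 0 e1) (vsmul 1 e2) = vadd (vsmul (x'*a+y'*b) e1) (vsmul (x'*c+y'*d) e2)"
    using sp by blast
  have q: "x*a+y*b = 1" "x*c+y*d = 0" "x'*a+y'*b = 0" "x'*c+y'*d = 1"
    using li_uniq[OF li 1] li_uniq[OF li 2] by auto
  have "(a*d-b*c)*(x*y'-x'*y) = 1"
  proof -
    have "(a*d-b*c)*(x*y'-x'*y) = (x*a+y*b)*(x'*c+y'*d) - (x*c+y*d)*(x'*a+y'*b)"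
      by (simp add: algebra_simps)
    then show ?thesis using q by simp
  qed
  then show False using h by simp
qed


lemma scale: fixes m :: "'k::field vec2 \<Rightarrow> 'k vec2 \<Rightarrow> 'k vec2"
  assumes "bilinear2 m" "natural_basis m e1 e2" "l1 \<noteq> 0" "l2 \<noteq> 0"
    "struct_matrix m e1 e2 = ((a,b),(c,d))"
  shows "natural_basis m (vsmul l1 e1) (vsmul l2 e2) \<and>
    struct_matrix m (vsmul l1 e1) (vsmul l2 e2) = ((l1*a, l2*l2*b/l1),(l1*l1*c/l2, l2*d))"
proof -
  have r: "\<And>c u v. m (vsmul c u) v = vsmul c (m u v)" "\<And>c u v. m u (vsmul c v) = vsmul c (m u v)"
    using assms(1) unfolding bilinear2_def by blast+
  have li: "lin_indep2 e1 e2" and z: "m e1 e2 = vzero" "m e2 e1 = vzero"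
    using assms(2) unfolding natural_basis_def by auto
  have E: "m e1 e1 = vadd (vsmul a e1) (vsmul c e2)" "m e2 e2 = vadd (vsmul b e1) (vsmul d e2)"
    using sm_iff[OF li] assms(5) by auto
  have li2: "lin_indep2 (vsmul l1 e1) (vsmul l2 e2)"
    unfolding lin_indep2_def
  proof (intro allI impI)
    fix x y assume "vadd (vsmul x (vsmul l1 e1)) (vsmul y (vsmul l2 e2)) = vzero"
    then have "vadd (vsmul (x*l1) e1) (vsmul (y*l2) e2) = vzero" by (simp add: vsmul_def mult.assoc)
    then have "x*l1 = 0 \<and> y*l2 = 0" using li unfolding lin_indep2_def by blast
    then show "x = 0 \<and> y = 0" using assms(3,4) by simp
  qed
  have nb: "natural_basis m (vsmul l1 e1) (vsmul l2 e2)"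
    unfolding natural_basis_def using li2 r z by (simp add: vsmul_def vzero_def)
  have "struct_matrix m (vsmul l1 e1) (vsmul l2 e2) = ((l1*a, l2*l2*b/l1),(l1*l1*c/l2, l2*d))"
    unfolding sm_iff[OF li2] r E using assms(3,4)
    by (simp add: vadd_def vsmul_def field_simps)
  then show ?thesis using nb by simp
qed

lemma swap: fixes m :: "'k::field vec2 \<Rightarrow> 'k vec2 \<Rightarrow> 'k vec2"
  assumes "natural_basis m e1 e2" "struct_matrix m e1 e2 = ((a,b),(c,d))"
  shows "natural_basis m e2 e1 \<and> struct_matrix m e2 e1 = ((d,c),(b,a))"
proof -
  have li: "lin_indep2 e1 e2" using assms(1) unfolding natural_basis_def by auto
  have li2: "lin_indep2 e2 e1" unfolding lin_indep2_def
  proof (intro allI impI)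
    fix x y assume "vadd (vsmul x e2) (vsmul y e1) = vzero"
    then have "vadd (vsmul y e1) (vsmul x e2) = vzero" by (simp add: vadd_def add.commute)
    then show "x = 0 \<and> y = 0" using li unfolding lin_indep2_def by blast
  qed
  have E: "m e1 e1 = vadd (vsmul a e1) (vsmul c e2)" "m e2 e2 = vadd (vsmul b e1) (vsmul d e2)"
    using sm_iff[OF li] assms(2) by auto
  show ?thesis using assms(1) li2 unfolding natural_basis_def sm_iff[OF li2] E
    by (simp add: vadd_def add.commute)
qed


lemma nf1: fixes m :: "'k::field vec2 \<Rightarrow> 'k vec2 \<Rightarrow> 'k vec2"
  assumes "bilinear2 m" "natural_basis m e1 e2" "struct_matrix m e1 e2 = ((a,b),(c,d))"
    "a \<noteq> 0" "b = 0" "c = 0" "d \<noteq> 0"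
  shows "\<exists>e1 e2. natural_basis m e1 e2 \<and> struct_matrix m e1 e2 = ((1, 0), (0, 1))"
proof -
  have "natural_basis m (vsmul (1/a) e1) (vsmul (1/d) e2) \<and> struct_matrix m (vsmul (1/a) e1) (vsmul (1/d) e2) = ((1, 0), (0, 1))"
    using scale[OF assms(1,2), of "1/a" "1/d" a b c d] assms(3-) by simp
  then show ?thesis by blast
qed

lemma nf2: fixes m :: "'k::field vec2 \<Rightarrow> 'k vec2 \<Rightarrow> 'k vec2"
  assumes "bilinear2 m" "natural_basis m e1 e2" "struct_matrix m e1 e2 = ((a,b),(c,d))"
    "a = 0" "b \<noteq> 0" "c \<noteq> 0" "d = 0"
  shows "\<exists>e1 e2 \<alpha>. \<alpha> \<noteq> 0 \<and> natural_basis m e1 e2 \<and>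
               struct_matrix m e1 e2 = ((0, \<alpha>), (1, 0))"
proof -
  have "natural_basis m (vsmul 1 e1) (vsmul c e2) \<and> struct_matrix m (vsmul 1 e1) (vsmul c e2) = ((0, c*c*b), (1, 0))"
    using scale[OF assms(1,2), of 1 c a b c d] assms(3-) by simp
  moreover have "c*c*b \<noteq> 0" using assms by simp
  ultimately show ?thesis by blast
qed

lemma nf3: fixes m :: "'k::field vec2 \<Rightarrow> 'k vec2 \<Rightarrow> 'k vec2"
  assumes "bilinear2 m" "natural_basis m e1 e2" "struct_matrix m e1 e2 = ((a,b),(c,d))"
    "a \<noteq> 0" "b \<noteq> 0" "c = 0" "d \<noteq> 0"
  shows "\<exists>e1 e2 \<alpha>. \<alpha> \<noteq> 0 \<and> natural_basis m e1 e2 \<and>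
               struct_matrix m e1 e2 = ((1, \<alpha>), (0, 1))"
proof -
  have "natural_basis m (vsmul (1/a) e1) (vsmul (1/d) e2) \<and> struct_matrix m (vsmul (1/a) e1) (vsmul (1/d) e2) = ((1, 1/d*(1/d)*b/(1/a)), (0, 1))"
    using scale[OF assms(1,2), of "1/a" "1/d" a b c d] assms(3-) by simp
  moreover have "1/d*(1/d)*b/(1/a) \<noteq> 0" using assms by simp
  ultimately show ?thesis by blast
qed

lemma nf4: fixes m :: "'k::field vec2 \<Rightarrow> 'k vec2 \<Rightarrow> 'k vec2"
  assumes "bilinear2 m" "natural_basis m e1 e2" "struct_matrix m e1 e2 = ((a,b),(c,d))"
    "a = 0" "b \<noteq> 0" "c \<noteq> 0" "d \<noteq> 0"
  shows "\<exists>e1 e2 \<alpha>. \<alpha> \<noteq> 0 \<and> natural_basis m e1 e2 \<and>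
               struct_matrix m e1 e2 = ((0, 1), (\<alpha>, 1))"
proof -
  have "natural_basis m (vsmul (b/(d*d)) e1) (vsmul (1/d) e2) \<and> struct_matrix m (vsmul (b/(d*d)) e1) (vsmul (1/d) e2) = ((0, 1), (b/(d*d)*(b/(d*d))*c/(1/d), 1))"
    using scale[OF assms(1,2), of "b/(d*d)" "1/d" a b c d] assms(3-) by simp
  moreover have "b/(d*d)*(b/(d*d))*c/(1/d) \<noteq> 0" using assms by simp
  ultimately show ?thesis by blast
qed

lemma nf5: fixes m :: "'k::field vec2 \<Rightarrow> 'k vec2 \<Rightarrow> 'k vec2"
  assumes "bilinear2 m" "natural_basis m e1 e2" "struct_matrix m e1 e2 = ((a,b),(c,d))"
    "a \<noteq> 0" "b \<noteq> 0" "c \<noteq> 0" "d \<noteq> 0" "a*d \<noteq> b*c"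
  shows "\<exists>e1 e2 \<alpha> \<beta>. \<alpha> \<noteq> 0 \<and> \<beta> \<noteq> 0 \<and> \<alpha> * \<beta> \<noteq> 1 \<and> natural_basis m e1 e2 \<and>
               struct_matrix m e1 e2 = ((1, \<alpha>), (\<beta>, 1))"
proof -
  have "1/d*(1/d)*b/(1/a) * (1/a*(1/a)*c/(1/d)) \<noteq> 1"
    using assms(4-) by (simp add: field_simps)
  moreover have "natural_basis m (vsmul (1/a) e1) (vsmul (1/d) e2) \<and> struct_matrix m (vsmul (1/a) e1) (vsmul (1/d) e2) = ((1, 1/d*(1/d)*b/(1/a)), (1/a*(1/a)*c/(1/d), 1))"
    using scale[OF assms(1,2), of "1/a" "1/d" a b c d] assms(3-) by simp
  moreover have "1/d*(1/d)*b/(1/a) \<noteq> 0" "1/a*(1/a)*c/(1/d) \<noteq> 0" using assms by simp_all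
  ultimately show ?thesis by blast
qed

theorem lemma3p1:
  fixes m :: "'k::field vec2 \<Rightarrow> 'k vec2 \<Rightarrow> 'k vec2"
  assumes "evolution_algebra m"
    and "square_full m"
  shows "(square_of m = D1 \<longrightarrow>
            (\<exists>e1 e2. natural_basis m e1 e2 \<and> struct_matrix m e1 e2 = ((1, 0), (0, 1))))
       \<and> (square_of m = D2 \<longrightarrow>
            (\<exists>e1 e2 \<alpha>. \<alpha> \<noteq> 0 \<and> natural_basis m e1 e2 \<and>
               struct_matrix m e1 e2 = ((0, \<alpha>), (1, 0))))
       \<and> (square_of m = D3 \<longrightarrow>
            (\<exists>e1 e2 \<alpha>. \<alpha> \<noteq> 0 \<and> natural_basis m e1 e2 \<and>
               struct_matrix m e1 e2 = ((1, \<alpha>), (0, 1))))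
       \<and> (square_of m = D4 \<longrightarrow>
            (\<exists>e1 e2 \<alpha>. \<alpha> \<noteq> 0 \<and> natural_basis m e1 e2 \<and>
               struct_matrix m e1 e2 = ((0, 1), (\<alpha>, 1))))
       \<and> (square_of m = D5 \<longrightarrow>
            (\<exists>e1 e2 \<alpha> \<beta>. \<alpha> \<noteq> 0 \<and> \<beta> \<noteq> 0 \<and> \<alpha> * \<beta> \<noteq> 1 \<and> natural_basis m e1 e2 \<and>
               struct_matrix m e1 e2 = ((1, \<alpha>), (\<beta>, 1))))"
proof -
  have bl: "bilinear2 m" using assms(1) unfolding evolution_algebra_def by blast
  obtain e1 e2 where nb: "natural_basis m e1 e2" using assms(1) unfolding evolution_algebra_def by blast
  obtain a b c d where sm: "struct_matrix m e1 e2 = ((a,b),(c,d))" by (metis prod.collapse)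
  have mem: "pseudo_square m e1 e2 \<in> square_of m" unfolding square_of_def using nb by blast
  note P = ps_eq[OF sm]
  have det: "a*d \<noteq> b*c" using det_nz[OF bl nb assms(2) sm] .
  obtain sw: "natural_basis m e2 e1" "struct_matrix m e2 e1 = ((d,c),(b,a))"
    using swap[OF nb sm] by blast
  show ?thesis
  proof (intro conjI impI)
    assume "square_of m = D1"
    then have "pseudo_square m e1 e2 = {L,R}" using mem unfolding D1_def by auto
    then show "\<exists>e1 e2. natural_basis m e1 e2 \<and> struct_matrix m e1 e2 = ((1, 0), (0, 1))"
      using P nf1[OF bl nb sm] by auto
  next
    assume "square_of m = D2"
    then have "pseudo_square m e1 e2 = {T,D}" using mem unfolding D2_def by auto
    then show "\<exists>e1 e2 \<alpha>. \<alpha> \<noteq> 0 \<and> natural_basis m e1 e2 \<and>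
               struct_matrix m e1 e2 = ((0, \<alpha>), (1, 0))"
      using P nf2[OF bl nb sm] by auto
  next
    assume "square_of m = D3"
    then have "pseudo_square m e1 e2 = {L,T,R} \<or> pseudo_square m e1 e2 = {L,R,D}"
      using mem unfolding D3_def by auto
    then show "\<exists>e1 e2 \<alpha>. \<alpha> \<noteq> 0 \<and> natural_basis m e1 e2 \<and>
               struct_matrix m e1 e2 = ((1, \<alpha>), (0, 1))"
      using P nf3[OF bl nb sm] nf3[OF bl sw] by auto
  next
    assume "square_of m = D4"
    then have "pseudo_square m e1 e2 = {L,T,D} \<or> pseudo_square m e1 e2 = {T,R,D}"
      using mem unfolding D4_def by auto
    then show "\<exists>e1 e2 \<alpha>. \<alpha> \<noteq> 0 \<and> natural_basis m e1 e2 \<and>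
               struct_matrix m e1 e2 = ((0, 1), (\<alpha>, 1))"
      using P nf4[OF bl nb sm] nf4[OF bl sw] by auto
  next
    assume "square_of m = D5"
    then have "pseudo_square m e1 e2 = {L,T,R,D}" using mem unfolding D5_def by auto
    then show "\<exists>e1 e2 \<alpha> \<beta>. \<alpha> \<noteq> 0 \<and> \<beta> \<noteq> 0 \<and> \<alpha> * \<beta> \<noteq> 1 \<and> natural_basis m e1 e2 \<and>
               struct_matrix m e1 e2 = ((1, \<alpha>), (\<beta>, 1))"
      using P nf5[OF bl nb sm _ _ _ _ det] by auto
  qed
qed

end
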